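(* Let $r \ge 3$ be an integer. For $n \ge 1$ let $g^{\mathrm{ns}}_r(n) = \max\{|\mathcal{F}| : \mathcal{F} \subseteq \{0,1\}^n \text{ contains no near-sunflower of size } r\}$ and $g^{\mathrm{ff}}_r(n) = \max\{|\mathcal{F}| : \mathcal{F} \subseteq \{0,1\}^n \text{ contains no focal family of size } r\}$. Then: (a) for every $n$, $g^{\mathrm{ns}}_r(n) \le g^{\mathrm{ff}}_r(n) \le (r-1)\, 2^{\lceil \frac{(r-2)n}{r-1} \rceil}$; (b) there exist positive constants $c^{\mathrm{ns}}_r$ and $c^{\mathrm{ff}}_r$ (depending only on $r$) such that for every $n$, $g^{\mathrm{ns}}_r(n) \ge c^{\mathrm{ns}}_r \left(\frac{2}{(r+1)^{1/(r-1)}}\right)^n$ and $g^{\mathrm{ff}}_r(n) \ge c^{\mathrm{ff}}_r \left(\frac{2}{r^{1/(r-1)}}\right)^n$.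
   Context: Vectors in $\{0,1\}^n$ are identified with subsets of $[n]=\{1,\dots,n\}$. A family $\mathcal{H}$ of $r$ distinct subsets of $[n]$ is a near-sunflower of size $r$ if every $i \in [n]$ belongs to exactly $0$, $1$, $r-1$ or $r$ of the sets in $\mathcal{H}$. A family $x^{(0)}, x^{(1)}, \dots, x^{(r-1)}$ of $r$ distinct vectors in $\{0,1\}^n$ is focal (with focus $x^{(0)}$) if for every coordinate $i \in [n]$, at least $r-2$ of the $r-1$ entries $x^{(1)}_i, \dots, x^{(r-1)}_i$ are equal to $x^{(0)}_i$. A family $\mathcal{F}$ contains a focal family of size $r$ if some $r$ distinct members of $\mathcal{F}$, with some choice of one of them as focus, form a focal family. *)

theory Defs
  imports Complex_Main
begin

text \<open>Vectors in {0,1}^n are identified with subsets of [n] = {1..n}.\<close>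

definition near_sunflower :: "nat \<Rightarrow> nat \<Rightarrow> nat set set \<Rightarrow> bool" where
  "near_sunflower n r H \<longleftrightarrow> finite H \<and> card H = r \<and>
     (\<forall>i\<in>{1..n}. card {A\<in>H. i \<in> A} \<in> {0, 1, r - 1, r})"

definition focal_family :: "nat \<Rightarrow> nat \<Rightarrow> nat set set \<Rightarrow> nat set \<Rightarrow> bool" where
  "focal_family n r H x \<longleftrightarrow> finite H \<and> card H = r \<and> x \<in> H \<and>
     (\<forall>i\<in>{1..n}. card {y\<in>H - {x}. (i \<in> y) = (i \<in> x)} \<ge> r - 2)"

definition contains_near_sunflower :: "nat \<Rightarrow> nat \<Rightarrow> nat set set \<Rightarrow> bool" where
  "contains_near_sunflower n r F \<longleftrightarrow> (\<exists>H\<subseteq>F. near_sunflower n r H)"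

definition contains_focal :: "nat \<Rightarrow> nat \<Rightarrow> nat set set \<Rightarrow> bool" where
  "contains_focal n r F \<longleftrightarrow> (\<exists>H\<subseteq>F. \<exists>x. focal_family n r H x)"

definition g_ns :: "nat \<Rightarrow> nat \<Rightarrow> nat" where
  "g_ns r n = Max {card F | F. F \<subseteq> Pow {1..n} \<and> \<not> contains_near_sunflower n r F}"

definition g_ff :: "nat \<Rightarrow> nat \<Rightarrow> nat" where
  "g_ff r n = Max {card F | F. F \<subseteq> Pow {1..n} \<and> \<not> contains_focal n r F}"

end

theory Submission
  imports Defs "HOL-Library.FuncSet"
begin


lemma count_supsets:
  assumes "finite U" "e \<subseteq> U" "card e = r" "r \<le> m"
  shows "card {S. S \<subseteq> U \<and> card S = m \<and> e \<subseteq> S} = (card U - r) choose (m - r)"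
proof -
  have fe: "finite e" using assms finite_subset by blast
  have "bij_betw (\<lambda>S. S - e) {S. S \<subseteq> U \<and> card S = m \<and> e \<subseteq> S} {T. T \<subseteq> U - e \<and> card T = m - r}"
  proof (rule bij_betwI[where g = "\<lambda>T. T \<union> e"])
    show "(\<lambda>S. S - e) \<in> {S. S \<subseteq> U \<and> card S = m \<and> e \<subseteq> S} \<rightarrow> {T. T \<subseteq> U - e \<and> card T = m - r}"
      using assms fe by (auto simp: card_Diff_subset)
    show "(\<lambda>T. T \<union> e) \<in> {T. T \<subseteq> U - e \<and> card T = m - r} \<rightarrow> {S. S \<subseteq> U \<and> card S = m \<and> e \<subseteq> S}"
    proof
      fix T assume T: "T \<in> {T. T \<subseteq> U - e \<and> card T = m - r}"
      have "finite T" using T assms(1) finite_subset by blast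
      moreover have "T \<inter> e = {}" using T by auto
      ultimately have "card (T \<union> e) = m" using T assms fe by (simp add: card_Un_disjoint)
      then show "T \<union> e \<in> {S. S \<subseteq> U \<and> card S = m \<and> e \<subseteq> S}" using T assms by auto
    qed
  qed auto
  then have "card {S. S \<subseteq> U \<and> card S = m \<and> e \<subseteq> S} = card {T. T \<subseteq> U - e \<and> card T = m - r}"
    by (rule bij_betw_same_card)
  also have "\<dots> = card (U - e) choose (m - r)" using assms by (simp add: n_subsets)
  also have "\<dots> = (card U - r) choose (m - r)" using assms fe by (simp add: card_Diff_subset)
  finally show ?thesis .
qed

lemma exists_le_avg:
  fixes f :: "'b \<Rightarrow> nat"
  assumes "finite A" "A \<noteq> {}"
  shows "\<exists>x\<in>A. f x * card A \<le> sum f A"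
proof (rule ccontr)
  assume "\<not> ?thesis"
  then have "\<forall>x\<in>A. sum f A < f x * card A" by auto
  then have "(\<Sum>x\<in>A. sum f A) < (\<Sum>x\<in>A. f x * card A)"
    using assms by (intro sum_strict_mono) auto
  then show False by (simp add: sum_distrib_left[symmetric] mult.commute)
qed

lemma binom_ratio:
  fixes m N r :: nat
  assumes "m \<le> N"
  shows "(m choose r) * N ^ r \<le> (N choose r) * m ^ r"
proof (induction r)
  case 0 then show ?case by simp
next
  case (Suc r)
  have a: "(m choose Suc r) * Suc r = (m choose r) * (m - r)"
    by (metis binomial_absorb_comp mult.commute times_binomial_minus1_eq diff_Suc_1 zero_less_Suc
        Suc_times_binomial_eq binomial_absorption)
  have b: "(N choose Suc r) * Suc r = (N choose r) * (N - r)"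
    by (metis binomial_absorb_comp mult.commute times_binomial_minus1_eq diff_Suc_1 zero_less_Suc
        Suc_times_binomial_eq binomial_absorption)
  have c: "(m - r) * N \<le> (N - r) * m"
  proof -
    have "m * r \<le> N * r" using assms by simp
    then have "N * m - N * r \<le> N * m - m * r" by (rule diff_le_mono2)
    then show ?thesis by (simp add: algebra_simps diff_mult_distrib diff_mult_distrib2)
  qed
  have "(m choose Suc r) * N ^ Suc r * Suc r = ((m choose Suc r) * Suc r) * (N ^ r * N)"
    by (simp only: power_Suc mult_ac)
  also have "\<dots> = ((m choose r) * N ^ r) * ((m - r) * N)"
    unfolding a by (simp only: mult_ac)
  also have "\<dots> \<le> ((N choose r) * m ^ r) * ((N - r) * m)"
    using Suc.IH c by (rule mult_le_mono)
  also have "\<dots> = ((N choose Suc r) * Suc r) * (m ^ r * m)"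
    unfolding b by (simp only: mult_ac)
  also have "\<dots> = (N choose Suc r) * m ^ Suc r * Suc r"
    by (simp only: power_Suc mult_ac)
  finally show ?case using mult_le_cancel2[of _ "Suc r"] by (metis zero_less_Suc)
qed

lemma card_filter_sum: "finite A \<Longrightarrow> card {x\<in>A. P x} = (\<Sum>x\<in>A. if P x then 1 else 0)"
  by (simp add: sum.If_cases Int_def)

lemma deletion:
  fixes U :: "'a set" and B :: "'a set set"
  assumes U: "finite U" and B: "B \<subseteq> Pow U" and Bc: "\<forall>e\<in>B. card e = r" and r1: "1 \<le> r"
    and mN: "m \<le> card U"
  shows "\<exists>F\<subseteq>U. (\<forall>e\<in>B. \<not> e \<subseteq> F) \<and>
           real m - real (card B) * (real m / real (card U)) ^ r \<le> real (card F)"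
proof (cases "m < r")
  case True
  obtain S where S: "S \<subseteq> U" "card S = m" using obtain_subset_with_card_n[OF mN] by metis
  have "\<forall>e\<in>B. \<not> e \<subseteq> S"
  proof (intro ballI notI)
    fix e assume "e \<in> B" "e \<subseteq> S"
    then have "card e \<le> card S" using S U by (meson card_mono finite_subset)
    then show False using \<open>e \<in> B\<close> Bc S True by auto
  qed
  moreover have "real m - real (card B) * (real m / real (card U)) ^ r \<le> real (card S)"
    using S by simp
  ultimately show ?thesis using S by blast
next
  case False
  then have rm: "r \<le> m" by simp
  define N where "N = card U"
  define SS where "SS = {S. S \<subseteq> U \<and> card S = m}"
  define bad where "bad S = card {e\<in>B. e \<subseteq> S}" for S
  have fB: "finite B" using B U by (meson finite_Pow_iff finite_subset)
  have fSS: "finite SS" unfolding SS_def using U by simp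
  have cSS: "card SS = N choose m" unfolding SS_def N_def using U by (simp add: n_subsets)
  have SSne: "SS \<noteq> {}" using cSS mN N_def by auto
  have "sum bad SS = (\<Sum>S\<in>SS. \<Sum>e\<in>B. if e \<subseteq> S then 1 else 0)"
    unfolding bad_def using fB by (simp add: card_filter_sum)
  also have "\<dots> = (\<Sum>e\<in>B. \<Sum>S\<in>SS. if e \<subseteq> S then 1 else 0)" by (rule sum.swap)
  also have "\<dots> = (\<Sum>e\<in>B. card {S\<in>SS. e \<subseteq> S})"
    using fSS by (simp add: card_filter_sum)
  also have "\<dots> = (\<Sum>e\<in>B. (N - r) choose (m - r))"
  proof (rule sum.cong)
    fix e assume e: "e \<in> B"
    have "{S\<in>SS. e \<subseteq> S} = {S. S \<subseteq> U \<and> card S = m \<and> e \<subseteq> S}" unfolding SS_def by auto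
    then show "card {S\<in>SS. e \<subseteq> S} = (N - r) choose (m - r)"
      using count_supsets[OF U _ _ rm, of e] e B Bc N_def by auto
  qed simp
  finally have tot: "sum bad SS = card B * ((N - r) choose (m - r))" by simp
  obtain S where S: "S \<in> SS" "bad S * card SS \<le> sum bad SS"
    using exists_le_avg[OF fSS SSne] by blast
  have "bad S * (N choose m) * (m choose r) \<le> card B * ((N - r) choose (m - r)) * (m choose r)"
    using S tot cSS by simp
  moreover have eq: "(N choose m) * (m choose r) = (N choose r) * ((N - r) choose (m - r))"
    using choose_mult[OF rm, of N] mN N_def by simp
  ultimately have "bad S * ((N choose r) * ((N - r) choose (m - r))) \<le> card B * ((N - r) choose (m - r)) * (m choose r)"
    by (metis mult.assoc)
  then have "bad S * (N choose r) * ((N - r) choose (m - r)) \<le> card B * (m choose r) * ((N - r) choose (m - r))"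
    by (simp add: mult_ac)
  moreover have "0 < (N - r) choose (m - r)" using mN rm N_def by simp
  ultimately have i1: "bad S * (N choose r) \<le> card B * (m choose r)" by simp
  have "bad S * (N choose r) * N ^ r \<le> card B * ((m choose r) * N ^ r)"
    using i1 by (metis mult.assoc mult_le_mono1)
  also have "\<dots> \<le> card B * ((N choose r) * m ^ r)"
    using binom_ratio[of m N r] mN N_def by simp
  finally have "(bad S * N ^ r) * (N choose r) \<le> (card B * m ^ r) * (N choose r)"
    by (simp add: mult_ac)
  moreover have "0 < N choose r" using mN rm N_def by simp
  ultimately have i2: "bad S * N ^ r \<le> card B * m ^ r" by simp
  have Npos: "0 < N" using mN rm r1 N_def by simp
  have i3: "real (bad S) \<le> real (card B) * (real m / real N) ^ r"
  proof -
    have "real (bad S) * real N ^ r \<le> real (card B) * real m ^ r"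
      using i2 by (metis of_nat_le_iff of_nat_mult of_nat_power)
    then show ?thesis using Npos by (simp add: power_divide field_simps)
  qed
  define X where "X = (\<lambda>e. SOME x. x \<in> e) ` {e\<in>B. e \<subseteq> S}"
  define F where "F = S - X"
  have SU: "S \<subseteq> U" "card S = m" using S unfolding SS_def by auto
  have "card X \<le> bad S" unfolding X_def bad_def by (rule card_image_le) (simp add: fB)
  moreover have "card S - card X \<le> card F" unfolding F_def by (rule diff_card_le_card_Diff) (simp add: X_def fB)
  ultimately have "real m - real (bad S) \<le> real (card F)" using SU by linarith
  moreover have "\<forall>e\<in>B. \<not> e \<subseteq> F"
  proof (intro ballI notI)
    fix e assume e: "e \<in> B" "e \<subseteq> F"
    have "finite e" using e B U by (meson PowD finite_subset subsetD)
    then have "e \<noteq> {}" using e Bc r1 by auto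
    then have "(SOME x. x \<in> e) \<in> e" by (simp add: some_in_eq)
    moreover have "(SOME x. x \<in> e) \<in> X" unfolding X_def using e F_def by auto
    ultimately show False using e F_def by auto
  qed
  moreover have "F \<subseteq> U" using SU F_def by auto
  ultimately show ?thesis using i3 N_def by (intro exI[of _ F]) auto
qed

lemma numeric:
  fixes a :: real and r n :: nat
  assumes a: "a \<ge> 1" and r: "r \<ge> 3"
  defines "\<beta> \<equiv> 2 / a powr (1 / real (r - 1))"
  defines "m \<equiv> nat \<lfloor>\<beta> ^ n / 2\<rfloor>"
  shows "m \<le> 2 ^ n" "(2 * a) ^ n * (real m / 2 ^ n) ^ r \<le> real m / 4" "\<beta> ^ n \<le> 2 * real m + 2"
proof -
  define s where "s = a powr (1 / real (r - 1))"
  have s1: "s \<ge> 1" unfolding s_def using a r by (simp add: ge_one_powr_ge_zero)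
  have sa: "s ^ (r - 1) = a"
  proof -
    have "s ^ (r - 1) = s powr real (r - 1)" using s1 by (simp add: powr_realpow)
    also have "\<dots> = a powr (1 / real (r - 1) * real (r - 1))" unfolding s_def by (simp add: powr_powr)
    also have "\<dots> = a" using r a by simp
    finally show ?thesis .
  qed
  have bn: "\<beta> ^ n = 2 ^ n / s ^ n" unfolding \<beta>_def s_def[symmetric] by (simp add: power_divide)
  have bpos: "\<beta> ^ n \<ge> 0" using bn s1 by simp
  have mfl: "real m = real_of_int \<lfloor>\<beta> ^ n / 2\<rfloor>" unfolding m_def using bpos by simp
  have mle: "real m \<le> \<beta> ^ n / 2" unfolding mfl by (rule of_int_floor_le)
  have mge: "\<beta> ^ n / 2 \<le> real m + 1" unfolding mfl using floor_correct[of "\<beta> ^ n / 2"] by simp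
  then show "\<beta> ^ n \<le> 2 * real m + 2" by linarith
  have sn: "s ^ n \<ge> 1" using s1 by simp
  have "\<beta> ^ n \<le> 2 ^ n" unfolding bn using sn by (simp add: divide_le_eq mult_le_cancel_left1)
  then have "real m \<le> 2 ^ n / 2" using mle by linarith
  then have "real m \<le> 2 ^ n" using zero_le_power[of "2::real" n] by linarith
  then show "m \<le> 2 ^ n" by (metis of_nat_le_iff of_nat_numeral of_nat_power)
  define t where "t = real m / 2 ^ n"
  have t0: "t \<ge> 0" unfolding t_def by simp
  have tle: "t \<le> 1 / (2 * s ^ n)" unfolding t_def using mle bn s1 by (simp add: field_simps)
  have "(2 * a) ^ n * t ^ r = (2 * a) ^ n * t ^ (r - 1) * t"
    using r power_minus_mult[of r t] by (simp add: mult.assoc)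
  also have "\<dots> \<le> (2 * a) ^ n * (1 / (2 * s ^ n)) ^ (r - 1) * t"
    using tle t0 a by (intro mult_right_mono mult_left_mono power_mono) auto
  also have "(1 / (2 * s ^ n)) ^ (r - 1) = 1 / (2 ^ (r - 1) * a ^ n)"
    by (simp add: power_mult_distrib power_divide sa[symmetric] power_mult[symmetric] mult.commute)
  also have "(2 * a) ^ n * (1 / (2 ^ (r - 1) * a ^ n)) * t = real m / 2 ^ (r - 1)"
    unfolding t_def using a by (simp add: power_mult_distrib field_simps)
  also have "\<dots> \<le> real m / 4"
  proof -
    have "(4::real) \<le> 2 ^ (r - 1)"
      using power_increasing[of 2 "r - 1" "2::real"] r by simp
    then show ?thesis by (intro divide_left_mono) auto
  qed
  finally show "(2 * a) ^ n * (real m / 2 ^ n) ^ r \<le> real m / 4" unfolding t_def .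
qed



definition vec :: "nat \<Rightarrow> (nat \<Rightarrow> bool \<times> nat) \<Rightarrow> nat \<Rightarrow> nat set" where
  "vec n p j = {i\<in>{1..n}. fst (p i) \<noteq> (snd (p i) = j)}"

lemma pattern_exists:
  fixes h :: "nat \<Rightarrow> nat set"
  assumes I: "finite I" "0 \<notin> I" and hsub: "\<forall>j\<in>I. h j \<subseteq> {1..n}"
    and dev: "\<forall>i\<in>{1..n}. \<exists>b. card {j\<in>I. (i \<in> h j) \<noteq> b} \<le> 1 \<and> {j\<in>I. (i \<in> h j) \<noteq> b} \<subseteq> I'"
  shows "\<exists>p\<in>PiE {1..n} (\<lambda>_. UNIV \<times> insert 0 I'). \<forall>j\<in>I. vec n p j = h j"
proof -
  define bb where "bb i = (SOME b. card {j\<in>I. (i \<in> h j) \<noteq> b} \<le> 1 \<and> {j\<in>I. (i \<in> h j) \<noteq> b} \<subseteq> I')" for i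
  have bb: "card {j\<in>I. (i \<in> h j) \<noteq> bb i} \<le> 1 \<and> {j\<in>I. (i \<in> h j) \<noteq> bb i} \<subseteq> I'" if "i \<in> {1..n}" for i
    unfolding bb_def using someI_ex[OF dev[rule_format, OF that]] .
  define D where "D i = {j\<in>I. (i \<in> h j) \<noteq> bb i}" for i
  define dv where "dv i = (if D i = {} then 0 else (SOME j. j \<in> D i))" for i
  define p where "p i = (if i \<in> {1..n} then (bb i, dv i) else undefined)" for i
  have pP: "p \<in> PiE {1..n} (\<lambda>_. UNIV \<times> insert 0 I')"
  proof -
    have "dv i \<in> insert 0 I'" if "i \<in> {1..n}" for i
    proof (cases "D i = {}")
      case False
      then have "(SOME j. j \<in> D i) \<in> D i" by (simp add: some_in_eq)
      then show ?thesis using bb[OF that] False unfolding dv_def D_def by auto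
    qed (simp add: dv_def)
    then show ?thesis unfolding p_def by auto
  qed
  have "vec n p j = h j" if j: "j \<in> I" for j
  proof -
    have "(i \<in> vec n p j) = (i \<in> h j)" if i: "i \<in> {1..n}" for i
    proof -
      have fD: "finite (D i)" using I unfolding D_def by simp
      have c1: "card (D i) \<le> 1" using bb[OF i] unfolding D_def by simp
      have iv: "(i \<in> vec n p j) = (bb i \<noteq> (dv i = j))" unfolding vec_def p_def using i by simp
      show ?thesis
      proof (cases "j \<in> D i")
        case True
        then have "D i = {j}" using c1 fD card_le_Suc0_iff_eq[OF fD] by auto
        then have "dv i = j" unfolding dv_def by simp
        then show ?thesis using iv True unfolding D_def by auto
      next
        case False
        have "dv i \<noteq> j"
        proof
          assume "dv i = j"
          then have "D i \<noteq> {}" using I j unfolding dv_def by (auto split: if_splits)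
          then have "(SOME j. j \<in> D i) \<in> D i" by (simp add: some_in_eq)
          then show False using \<open>dv i = j\<close> False \<open>D i \<noteq> {}\<close> unfolding dv_def by simp
        qed
        then show ?thesis using iv False j unfolding D_def by auto
      qed
    qed
    moreover have "vec n p j \<subseteq> {1..n}" unfolding vec_def by auto
    ultimately show ?thesis using hsub j by blast
  qed
  then show ?thesis using pP by blast
qed

lemma count_by_patterns:
  fixes \<H> :: "nat set set set"
  assumes "\<forall>H\<in>\<H>. \<exists>p\<in>PiE {1..n} (\<lambda>_. UNIV \<times> K). H = vec n p ` I" and "finite K"
  shows "card \<H> \<le> (2 * card K) ^ n"
proof -
  have "\<H> \<subseteq> (\<lambda>p. vec n p ` I) ` PiE {1..n} (\<lambda>_. UNIV \<times> K)" using assms by blast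
  then have "card \<H> \<le> card ((\<lambda>p. vec n p ` I) ` PiE {1..n} (\<lambda>_. (UNIV::bool set) \<times> K))"
    using assms by (intro card_mono) (auto intro!: finite_PiE)
  also have "\<dots> \<le> card (PiE {1..n} (\<lambda>_. (UNIV::bool set) \<times> K))" by (rule card_image_le) (auto intro!: finite_PiE assms)
  also have "\<dots> = (2 * card K) ^ n" by (simp add: card_PiE card_cartesian_product)
  finally show ?thesis .
qed



lemma ns_patterns:
  assumes r: "r \<ge> 3" and HP: "H \<subseteq> Pow {1..n}" and ns: "near_sunflower n r H"
  shows "\<exists>p\<in>PiE {1..n} (\<lambda>_. UNIV \<times> {0..r}). H = vec n p ` {1..r}"
proof -
  have fH: "finite H" and cH: "card H = r" and cnt: "\<forall>i\<in>{1..n}. card {A\<in>H. i \<in> A} \<in> {0, 1, r - 1, r}"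
    using ns unfolding near_sunflower_def by auto
  obtain h where h: "bij_betw h {1..r} H" using ex_bij_betw_nat_finite_1[OF fH] cH by auto
  have inj: "inj_on h {1..r}" and im: "h ` {1..r} = H" using h by (auto simp: bij_betw_def)
  have hsub: "\<forall>j\<in>{1..r}. h j \<subseteq> {1..n}" using im HP by auto
  have dev: "\<forall>i\<in>{1..n}. \<exists>b. card {j\<in>{1..r}. (i \<in> h j) \<noteq> b} \<le> 1 \<and> {j\<in>{1..r}. (i \<in> h j) \<noteq> b} \<subseteq> {1..r}"
  proof
    fix i assume i: "i \<in> {1..n}"
    define J where "J = {j\<in>{1..r}. i \<in> h j}"
    have "h ` J = {A\<in>H. i \<in> A}" unfolding J_def using im by auto
    moreover have "card (h ` J) = card J" using inj unfolding J_def by (intro card_image) (auto intro: inj_on_subset)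
    ultimately have cJe: "card J = card {A\<in>H. i \<in> A}" by simp
    have c0: "card {A\<in>H. i \<in> A} \<in> {0, 1, r - 1, r}" using cnt i by blast
    have cJ: "card J \<in> {0, 1, r - 1, r}" using c0 unfolding cJe .
    have fJ: "finite J" unfolding J_def by simp
    show "\<exists>b. card {j\<in>{1..r}. (i \<in> h j) \<noteq> b} \<le> 1 \<and> {j\<in>{1..r}. (i \<in> h j) \<noteq> b} \<subseteq> {1..r}"
    proof (cases "card J \<ge> 2")
      case True
      have e: "{j\<in>{1..r}. (i \<in> h j) \<noteq> True} = {1..r} - J" unfolding J_def by auto
      have "J \<subseteq> {1..r}" unfolding J_def by blast
      then have "card ({1..r} - J) = card {1..r} - card J" by (rule card_Diff_subset[OF fJ])
      then have "card ({1..r} - J) = r - card J" by simp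
      moreover have "card J \<ge> r - 1" using cJ True r by auto
      ultimately show ?thesis using e by (intro exI[of _ True]) auto
    next
      case False
      have e: "{j\<in>{1..r}. (i \<in> h j) \<noteq> False} = J" unfolding J_def by auto
      show ?thesis using e False by (intro exI[of _ False]) (auto simp: J_def)
    qed
  qed
  obtain p where p: "p \<in> PiE {1..n} (\<lambda>_. UNIV \<times> insert 0 {1..r})" "\<forall>j\<in>{1..r}. vec n p j = h j"
    using pattern_exists[OF _ _ hsub dev] by auto
  have "insert 0 {1..r} = {0..r}" by auto
  moreover have "vec n p ` {1..r} = H" using p(2) im by auto
  ultimately show ?thesis using p(1) by auto
qed

lemma focal_patterns:
  assumes r: "r \<ge> 3" and HP: "H \<subseteq> Pow {1..n}" and ff: "focal_family n r H x"
  shows "\<exists>p\<in>PiE {1..n} (\<lambda>_. UNIV \<times> {0..r-1}). H = vec n p ` {1..r}"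
proof -
  have fH: "finite H" and cH: "card H = r" and xH: "x \<in> H"
    and cnt: "\<forall>i\<in>{1..n}. card {y\<in>H - {x}. (i \<in> y) = (i \<in> x)} \<ge> r - 2"
    using ff unfolding focal_family_def by auto
  have cH1: "card (H - {x}) = r - 1" using fH cH xH by simp
  have fHx: "finite (H - {x})" using fH by blast
  obtain h' where h': "bij_betw h' {1..r-1} (H - {x})" using ex_bij_betw_nat_finite_1[OF fHx] unfolding cH1 by blast
  have inj: "inj_on h' {1..r-1}" and im: "h' ` {1..r-1} = H - {x}" using h' by (auto simp: bij_betw_def)
  define h where "h j = (if j = r then x else h' j)" for j
  have "{1..r} = insert r {1..r-1}" using r by auto
  moreover have "h ` {1..r-1} = h' ` {1..r-1}" unfolding h_def by (intro image_cong) auto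
  moreover have "h r = x" unfolding h_def by simp
  ultimately have "h ` {1..r} = insert x (H - {x})" using im by simp
  then have imh: "h ` {1..r} = H" using insert_Diff[OF xH] by simp
  have hsub: "\<forall>j\<in>{1..r}. h j \<subseteq> {1..n}" using imh HP by auto
  have dev: "\<forall>i\<in>{1..n}. \<exists>b. card {j\<in>{1..r}. (i \<in> h j) \<noteq> b} \<le> 1 \<and> {j\<in>{1..r}. (i \<in> h j) \<noteq> b} \<subseteq> {1..r-1}"
  proof
    fix i assume i: "i \<in> {1..n}"
    define D where "D = {j\<in>{1..r-1}. (i \<in> h' j) \<noteq> (i \<in> x)}"
    have e: "{j\<in>{1..r}. (i \<in> h j) \<noteq> (i \<in> x)} = D" unfolding D_def h_def using r by auto
    define Ag where "Ag = {y\<in>H - {x}. (i \<in> y) = (i \<in> x)}"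
    define Di where "Di = {y\<in>H - {x}. (i \<in> y) \<noteq> (i \<in> x)}"
    have "h' ` D = {y \<in> h' ` {1..r-1}. (i \<in> y) \<noteq> (i \<in> x)}" unfolding D_def by blast
    then have "h' ` D = Di" unfolding Di_def im .
    moreover have "D \<subseteq> {1..r-1}" unfolding D_def by blast
    then have "inj_on h' D" using inj_on_subset[OF inj] by blast
    then have "card (h' ` D) = card D" by (rule card_image)
    ultimately have cD: "card D = card Di" by simp
    have "Ag \<union> Di = H - {x}" "Ag \<inter> Di = {}" unfolding Ag_def Di_def by auto
    moreover have "finite Ag" "finite Di" using fH unfolding Ag_def Di_def by auto
    ultimately have "card (Ag \<union> Di) = card Ag + card Di" by (intro card_Un_disjoint)
    then have "card Ag + card Di = r - 1" using cH1 \<open>Ag \<union> Di = H - {x}\<close> by simp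
    moreover have "card Ag \<ge> r - 2" using cnt i unfolding Ag_def by auto
    ultimately have "card Di \<le> 1" using r by linarith
    moreover have "D \<subseteq> {1..r-1}" unfolding D_def by blast
    ultimately show "\<exists>b. card {j\<in>{1..r}. (i \<in> h j) \<noteq> b} \<le> 1 \<and> {j\<in>{1..r}. (i \<in> h j) \<noteq> b} \<subseteq> {1..r-1}"
      using e cD by (intro exI[of _ "i \<in> x"]) simp
  qed
  obtain p where p: "p \<in> PiE {1..n} (\<lambda>_. UNIV \<times> insert 0 {1..r-1})" "\<forall>j\<in>{1..r}. vec n p j = h j"
    using pattern_exists[OF _ _ hsub dev] by auto
  have "insert 0 {1..r-1} = {0..r-1}" by auto
  moreover have "vec n p ` {1..r} = H" using p(2) imh by auto
  ultimately show ?thesis using p(1) by auto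
qed



lemma upper_bound:
  assumes r: "r \<ge> 3" and FP: "F \<subseteq> Pow {1..n}" and nf: "\<not> contains_focal n r F"
  shows "card F \<le> (r - 1) * 2 ^ (n - n div (r - 1))"
proof -
  define q where "q = n div (r - 1)"
  define P where "P j = {j * q + 1 .. (j + 1) * q}" for j :: nat
  have Psub: "P j \<subseteq> {1..n}" if "j < r - 1" for j
  proof -
    have "(j + 1) * q \<le> (r - 1) * q" using that by (intro mult_le_mono1) simp
    also have "\<dots> \<le> n" unfolding q_def by (metis div_times_less_eq_dividend mult.commute)
    finally show ?thesis unfolding P_def by auto
  qed
  have cP: "card (P j) = q" for j unfolding P_def by simp
  have Pidx: "j = (i - 1) div q" if "i \<in> P j" for i j
  proof -
    have "j * q + 1 \<le> i" "i \<le> (j + 1) * q" using that unfolding P_def by auto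
    then have "q > 0" by (cases q) auto
    have "j * q \<le> i - 1" "i - 1 < (j + 1) * q" using \<open>j * q + 1 \<le> i\<close> \<open>i \<le> (j + 1) * q\<close> by linarith+
    then show ?thesis using \<open>q > 0\<close>
      by (metis add.commute div_nat_eqI mult.commute mult_Suc plus_1_eq_Suc)
  qed
  have claim: "\<exists>j<r-1. \<forall>y\<in>F. y - P j = x - P j \<longrightarrow> y = x" if xF: "x \<in> F" for x
  proof (rule ccontr)
    assume "\<not> ?thesis"
    then have "\<forall>j<r-1. \<exists>y. y \<in> F \<and> y - P j = x - P j \<and> y \<noteq> x" by blast
    then obtain Y where Y: "\<And>j. j < r - 1 \<Longrightarrow> Y j \<in> F \<and> Y j - P j = x - P j \<and> Y j \<noteq> x" by metis
    have xsub: "x \<subseteq> {1..n}" using xF FP by auto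
    have Ysub: "Y j \<subseteq> {1..n}" if "j < r - 1" for j using Y[OF that] FP by auto
    have agree: "(i \<in> Y j) = (i \<in> x)" if "j < r - 1" "i \<notin> P j" for i j
    proof -
      have "(i \<in> Y j - P j) = (i \<in> x - P j)" using Y[OF that(1)] by simp
      then show ?thesis using that(2) by simp
    qed
    have injY: "inj_on Y {..<r-1}"
    proof (rule inj_onI)
      fix j k assume jk: "j \<in> {..<r-1}" "k \<in> {..<r-1}" "Y j = Y k"
      show "j = k"
      proof (rule ccontr)
        assume "j \<noteq> k"
        have "(i \<in> Y j) = (i \<in> x)" for i
        proof (cases "i \<in> P j")
          case True
          then have "i \<notin> P k" using Pidx \<open>j \<noteq> k\<close> by metis
          then show ?thesis using agree[of k i] jk by simp
        next
          case False
          then show ?thesis using agree[of j i] jk by simp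
        qed
        then have "Y j = x" by blast
        then show False using Y jk by auto
      qed
    qed
    define H where "H = insert x (Y ` {..<r-1})"
    have xnot: "x \<notin> Y ` {..<r-1}" using Y by force
    have HmX: "H - {x} = Y ` {..<r-1}" unfolding H_def using xnot by auto
    have cardH: "card H = r"
    proof -
      have "card (Y ` {..<r-1}) = r - 1" using card_image[OF injY] by simp
      then show ?thesis unfolding H_def using xnot r by simp
    qed
    have foc: "focal_family n r H x"
      unfolding focal_family_def
    proof (intro conjI ballI)
      show "finite H" unfolding H_def by simp
      show "card H = r" by (rule cardH)
      show "x \<in> H" unfolding H_def by simp
    next
      fix i assume i: "i \<in> {1..n}"
      define t where "t = (i - 1) div q"
      have "Y ` ({..<r-1} - {t}) \<subseteq> {y \<in> H - {x}. (i \<in> y) = (i \<in> x)}"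
      proof
        fix y assume "y \<in> Y ` ({..<r-1} - {t})"
        then obtain j where j: "j < r - 1" "j \<noteq> t" "y = Y j" by auto
        then have "i \<notin> P j" using Pidx t_def by metis
        then have "(i \<in> y) = (i \<in> x)" using agree j by simp
        then show "y \<in> {y \<in> H - {x}. (i \<in> y) = (i \<in> x)}" using HmX j by auto
      qed
      moreover have "finite {y \<in> H - {x}. (i \<in> y) = (i \<in> x)}" unfolding H_def by simp
      ultimately have "card (Y ` ({..<r-1} - {t})) \<le> card {y \<in> H - {x}. (i \<in> y) = (i \<in> x)}"
        by (rule card_mono[rotated])
      moreover have "card (Y ` ({..<r-1} - {t})) = card ({..<r-1} - {t})"
      proof (rule card_image)
        show "inj_on Y ({..<r-1} - {t})" by (rule inj_on_subset[OF injY]) (rule Diff_subset)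
      qed
      moreover have "card ({..<r-1::nat}) - card {t} \<le> card ({..<r-1} - {t})"
        by (rule diff_card_le_card_Diff) simp
      moreover have "card ({..<r-1::nat}) - card {t} = r - 2" by simp
      ultimately show "r - 2 \<le> card {y \<in> H - {x}. (i \<in> y) = (i \<in> x)}" by linarith
    qed
    have "Y j \<in> F" if "j < r - 1" for j using Y[OF that] by (rule conjunct1)
    then have "H \<subseteq> F" unfolding H_def using xF by blast
    then show False using nf foc unfolding contains_focal_def by blast
  qed
  define jx where "jx x = (SOME j. j < r - 1 \<and> (\<forall>y\<in>F. y - P j = x - P j \<longrightarrow> y = x))" for x
  have jx: "jx x < r - 1 \<and> (\<forall>y\<in>F. y - P (jx x) = x - P (jx x) \<longrightarrow> y = x)" if "x \<in> F" for x
    unfolding jx_def using someI_ex[OF claim[OF that]] by simp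
  define \<phi> where "\<phi> x = (jx x, x - P (jx x))" for x
  have "inj_on \<phi> F"
  proof (rule inj_onI)
    fix x y assume "x \<in> F" "y \<in> F" "\<phi> x = \<phi> y"
    have p: "(jx x, x - P (jx x)) = (jx y, y - P (jx y))" using \<open>\<phi> x = \<phi> y\<close> unfolding \<phi>_def .
    then have c1: "jx x = jx y" by (rule Pair_inject)
    have c2: "x - P (jx x) = y - P (jx y)" using p by (rule Pair_inject)
    have "x - P (jx x) = y - P (jx x)" using c2 unfolding c1[symmetric] .
    then have eq: "y - P (jx x) = x - P (jx x)" by (rule sym)
    have "\<forall>y\<in>F. y - P (jx x) = x - P (jx x) \<longrightarrow> y = x" using jx[OF \<open>x \<in> F\<close>] by (rule conjunct2)
    then have "y - P (jx x) = x - P (jx x) \<longrightarrow> y = x" using \<open>y \<in> F\<close> by (rule bspec)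
    then have "y = x" using eq by (rule mp)
    then show "x = y" by (rule sym)
  qed
  then have "card F = card (\<phi> ` F)" by (simp add: card_image)
  also have "\<dots> \<le> card (SIGMA j:{..<r-1}. Pow ({1..n} - P j))"
  proof (rule card_mono)
    show "finite (SIGMA j:{..<r-1}. Pow ({1..n} - P j))" by auto
    show "\<phi> ` F \<subseteq> (SIGMA j:{..<r-1}. Pow ({1..n} - P j))"
    proof (rule image_subsetI)
      fix x assume x: "x \<in> F"
      have "jx x < r - 1" using jx[OF x] by (rule conjunct1)
      moreover have "x \<subseteq> {1..n}" using x FP by blast
      ultimately show "\<phi> x \<in> (SIGMA j:{..<r-1}. Pow ({1..n} - P j))" unfolding \<phi>_def by blast
    qed
  qed
  also have "\<dots> = (\<Sum>j<r-1. 2 ^ (n - q))"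
  proof -
    have "card (Pow ({1..n} - P j)) = 2 ^ (n - q)" if "j < r - 1" for j
    proof -
      have fin: "finite (P j)" by (simp add: P_def)
      have "card ({1..n} - P j) = card {1..n} - card (P j)"
        using card_Diff_subset[OF fin Psub[OF that]] .
      then show ?thesis using cP[of j] by (simp add: card_Pow)
    qed
    then show ?thesis by (simp add: card_SigmaI)
  qed
  also have "\<dots> = (r - 1) * 2 ^ (n - n div (r - 1))" unfolding q_def by simp
  finally show ?thesis .
qed

lemma ceil_eq:
  assumes r: "r \<ge> 3"
  shows "nat \<lceil>real ((r - 2) * n) / real (r - 1)\<rceil> = n - n div (r - 1)"
proof -
  define d where "d = r - 1"
  have d: "d \<ge> 2" "r - 2 = d - 1" unfolding d_def using r by auto
  have e1: "real ((r - 2) * n) / real d = real n - real n / real d"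
  proof -
    have "real ((r - 2) * n) = real d * real n - real n" using d by (simp add: of_nat_diff algebra_simps)
    then show ?thesis using d by (simp add: field_simps)
  qed
  have fl: "\<lfloor>real n / real d\<rfloor> = int (n div d)" by (metis floor_divide_of_nat_eq of_int_of_nat_eq)
  have l1: "real (n div d) \<le> real n / real d"
    using of_int_floor_le[of "real n / real d"] unfolding fl by simp
  have l2: "real n / real d < real (n div d) + 1"
    using floor_correct[of "real n / real d"] unfolding fl by simp
  have nd: "n div d \<le> n" by (rule div_le_dividend)
  have "\<lceil>real ((r - 2) * n) / real d\<rceil> = int (n - n div d)"
  proof (rule ceiling_unique)
    show "real_of_int (int (n - n div d)) - 1 < real ((r - 2) * n) / real d"
      unfolding e1 using l2 nd by (simp add: of_nat_diff)
    show "real ((r - 2) * n) / real d \<le> real_of_int (int (n - n div d))"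
      unfolding e1 using l1 nd by (simp add: of_nat_diff)
  qed
  then show ?thesis unfolding d_def by simp
qed



lemma focal_imp_ns:
  assumes r: "r \<ge> 3" and ff: "focal_family n r H x"
  shows "near_sunflower n r H"
proof -
  have fH: "finite H" and cH: "card H = r" and xH: "x \<in> H"
    and cnt: "\<forall>i\<in>{1..n}. card {y\<in>H - {x}. (i \<in> y) = (i \<in> x)} \<ge> r - 2"
    using ff unfolding focal_family_def by auto
  have cH1: "card (H - {x}) = r - 1" using fH cH xH by simp
  have "card {A\<in>H. i \<in> A} \<in> {0, 1, r - 1, r}" if i: "i \<in> {1..n}" for i
  proof -
    define Ag where "Ag = {y\<in>H - {x}. (i \<in> y) = (i \<in> x)}"
    define Di where "Di = {y\<in>H - {x}. (i \<in> y) \<noteq> (i \<in> x)}"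
    have u: "Ag \<union> Di = H - {x}" and dj: "Ag \<inter> Di = {}" unfolding Ag_def Di_def by auto
    have fin: "finite Ag" "finite Di" using fH unfolding Ag_def Di_def by auto
    have "card (Ag \<union> Di) = card Ag + card Di" using fin dj by (intro card_Un_disjoint)
    then have s: "card Ag + card Di = r - 1" using cH1 u by simp
    have ag: "card Ag \<ge> r - 2" using cnt i unfolding Ag_def by auto
    show ?thesis
    proof (cases "i \<in> x")
      case True
      have "{A\<in>H. i \<in> A} = insert x Ag" unfolding Ag_def using True xH by auto
      moreover have "x \<notin> Ag" unfolding Ag_def by simp
      ultimately have "card {A\<in>H. i \<in> A} = card Ag + 1" using fin by simp
      then show ?thesis using s ag r by auto
    next
      case False
      have "{A\<in>H. i \<in> A} = Di" unfolding Di_def using False by auto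
      then show ?thesis using s ag r by auto
    qed
  qed
  then show ?thesis unfolding near_sunflower_def using fH cH by auto
qed

lemma fin_cards: "finite {card F | F. F \<subseteq> Pow {1..(n::nat)} \<and> Q F}"
proof -
  have "{card F | F. F \<subseteq> Pow {1..n} \<and> Q F} \<subseteq> card ` Pow (Pow {1..(n::nat)})" by auto
  then show ?thesis by (rule finite_subset) simp
qed

lemma g_ns_ge: "F \<subseteq> Pow {1..n} \<Longrightarrow> \<not> contains_near_sunflower n r F \<Longrightarrow> card F \<le> g_ns r n"
  unfolding g_ns_def by (rule Max_ge[OF fin_cards]) blast

lemma g_ff_ge: "F \<subseteq> Pow {1..n} \<Longrightarrow> \<not> contains_focal n r F \<Longrightarrow> card F \<le> g_ff r n"
  unfolding g_ff_def by (rule Max_ge[OF fin_cards]) blast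

lemma g_ff_le:
  assumes "\<And>F. F \<subseteq> Pow {1..n} \<Longrightarrow> \<not> contains_focal n r F \<Longrightarrow> card F \<le> K"
  shows "g_ff r n \<le> K"
proof -
  have ne: "{card F | F. F \<subseteq> Pow {1..n} \<and> \<not> contains_focal n r F} \<noteq> {}"
  proof -
    have "\<not> contains_focal n r {}" unfolding contains_focal_def focal_family_def by auto
    then show ?thesis by blast
  qed
  have "\<forall>k\<in>{card F | F. F \<subseteq> Pow {1..n} \<and> \<not> contains_focal n r F}. k \<le> K"
  proof
    fix k assume "k \<in> {card F | F. F \<subseteq> Pow {1..n} \<and> \<not> contains_focal n r F}"
    then obtain F where F: "k = card F" "F \<subseteq> Pow {1..n}" "\<not> contains_focal n r F" by blast
    then show "k \<le> K" using assms by simp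
  qed
  then show ?thesis unfolding g_ff_def using Max_le_iff[OF fin_cards ne] by simp
qed

lemma ns_le_ff:
  assumes r: "r \<ge> 3"
  shows "g_ns r n \<le> g_ff r n"
proof -
  have sub: "{card F | F. F \<subseteq> Pow {1..n} \<and> \<not> contains_near_sunflower n r F}
     \<subseteq> {card F | F. F \<subseteq> Pow {1..n} \<and> \<not> contains_focal n r F}"
  proof
    fix k assume "k \<in> {card F | F. F \<subseteq> Pow {1..n} \<and> \<not> contains_near_sunflower n r F}"
    then obtain F where F: "k = card F" "F \<subseteq> Pow {1..n}" "\<not> contains_near_sunflower n r F" by blast
    have "\<not> contains_focal n r F"
    proof
      assume "contains_focal n r F"
      then obtain H x where "H \<subseteq> F" "focal_family n r H x" unfolding contains_focal_def by blast
      then have "contains_near_sunflower n r F" unfolding contains_near_sunflower_def using focal_imp_ns[OF r] by blast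
      then show False using F(3) by contradiction
    qed
    then show "k \<in> {card F | F. F \<subseteq> Pow {1..n} \<and> \<not> contains_focal n r F}" using F by blast
  qed
  have "\<not> contains_near_sunflower n r {}" unfolding contains_near_sunflower_def near_sunflower_def using r by auto
  then have ne: "{card F | F. F \<subseteq> Pow {1..n} \<and> \<not> contains_near_sunflower n r F} \<noteq> {}" by blast
  show ?thesis unfolding g_ns_def g_ff_def by (rule Max_mono[OF sub ne fin_cards])
qed

lemma lower_general:
  fixes g :: "nat \<Rightarrow> nat" and a :: real
  assumes a: "a \<ge> 1" and r: "r \<ge> 3" and g1: "\<And>n. g n \<ge> 1"
    and gm: "\<And>n m. m \<le> 2 ^ n \<Longrightarrow> real m - (2 * a) ^ n * (real m / 2 ^ n) ^ r \<le> real (g n)"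
  shows "\<exists>c>0. \<forall>n\<ge>1. real (g n) \<ge> c * (2 / a powr (1 / real (r - 1))) ^ n"
proof (intro exI[of _ "3/16"] conjI allI impI)
  fix n :: nat
  define \<beta> where "\<beta> = 2 / a powr (1 / real (r - 1))"
  define m where "m = nat \<lfloor>\<beta> ^ n / 2\<rfloor>"
  have n1: "m \<le> 2 ^ n" "(2 * a) ^ n * (real m / 2 ^ n) ^ r \<le> real m / 4" "\<beta> ^ n \<le> 2 * real m + 2"
    using numeric[OF a r, of n] unfolding \<beta>_def m_def by auto
  have "real m - real m / 4 \<le> real (g n)" using gm[OF n1(1)] n1(2) by linarith
  moreover have "1 \<le> real (g n)" using g1[of n] by simp
  ultimately show "3 / 16 * \<beta> ^ n \<le> real (g n)" using n1(3) by linarith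
qed simp



lemma ns_lower_n:
  assumes r: "r \<ge> 3" and m: "m \<le> 2 ^ n"
  shows "real m - (2 * real (r + 1)) ^ n * (real m / 2 ^ n) ^ r \<le> real (g_ns r n)"
proof -
  define U where "U = Pow {1..n}"
  define B where "B = {H. H \<subseteq> U \<and> near_sunflower n r H}"
  have fU: "finite U" unfolding U_def by simp
  have cU: "card U = 2 ^ n" unfolding U_def by (simp add: card_Pow)
  have BU: "B \<subseteq> Pow U" unfolding B_def by blast
  have Bc: "\<forall>e\<in>B. card e = r" unfolding B_def near_sunflower_def by blast
  obtain F where F: "F \<subseteq> U" "\<forall>e\<in>B. \<not> e \<subseteq> F"
    "real m - real (card B) * (real m / real (card U)) ^ r \<le> real (card F)"
  proof -
    have "1 \<le> r" "m \<le> card U" using r m cU by auto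
    from deletion[OF fU BU Bc this] show ?thesis using that by blast
  qed
  have "\<forall>H\<in>B. \<exists>p\<in>PiE {1..n} (\<lambda>_. UNIV \<times> {0..r}). H = vec n p ` {1..r}"
    using ns_patterns[OF r] unfolding B_def U_def by blast
  then have cnt: "card B \<le> (2 * card {0..r}) ^ n" by (rule count_by_patterns) simp
  have cc: "card {0..r} = r + 1" by simp
  have "card B \<le> (2 * (r + 1)) ^ n" using cnt unfolding cc .
  then have "real (card B) \<le> real ((2 * (r + 1)) ^ n)" by (simp only: of_nat_le_iff)
  then have cB: "real (card B) \<le> (2 * real (r + 1)) ^ n" by simp
  have "\<not> contains_near_sunflower n r F"
  proof
    assume "contains_near_sunflower n r F"
    then obtain H where "H \<subseteq> F" "near_sunflower n r H" unfolding contains_near_sunflower_def by blast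
    moreover then have "H \<in> B" unfolding B_def using F(1) by blast
    ultimately show False using F(2) by blast
  qed
  then have g: "real (card F) \<le> real (g_ns r n)" using g_ns_ge F(1) unfolding U_def by simp
  have "(real (card B)) * (real m / 2 ^ n) ^ r \<le> (2 * real (r + 1)) ^ n * (real m / 2 ^ n) ^ r"
    using cB by (intro mult_right_mono) auto
  then show ?thesis using F(3) g cU by simp
qed

lemma ff_lower_n:
  assumes r: "r \<ge> 3" and m: "m \<le> 2 ^ n"
  shows "real m - (2 * real r) ^ n * (real m / 2 ^ n) ^ r \<le> real (g_ff r n)"
proof -
  define U where "U = Pow {1..n}"
  define B where "B = {H. H \<subseteq> U \<and> (\<exists>x. focal_family n r H x)}"
  have fU: "finite U" unfolding U_def by simp
  have cU: "card U = 2 ^ n" unfolding U_def by (simp add: card_Pow)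
  have BU: "B \<subseteq> Pow U" unfolding B_def by blast
  have Bc: "\<forall>e\<in>B. card e = r" unfolding B_def focal_family_def by blast
  obtain F where F: "F \<subseteq> U" "\<forall>e\<in>B. \<not> e \<subseteq> F"
    "real m - real (card B) * (real m / real (card U)) ^ r \<le> real (card F)"
  proof -
    have "1 \<le> r" "m \<le> card U" using r m cU by auto
    from deletion[OF fU BU Bc this] show ?thesis using that by blast
  qed
  have "\<forall>H\<in>B. \<exists>p\<in>PiE {1..n} (\<lambda>_. UNIV \<times> {0..r-1}). H = vec n p ` {1..r}"
    using focal_patterns[OF r] unfolding B_def U_def by blast
  then have cnt: "card B \<le> (2 * card {0..r-1}) ^ n" by (rule count_by_patterns) simp
  have cc: "card {0..r-1} = r" using r by simp
  have "card B \<le> (2 * r) ^ n" using cnt unfolding cc .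
  then have "real (card B) \<le> real ((2 * r) ^ n)" by (simp only: of_nat_le_iff)
  then have cB: "real (card B) \<le> (2 * real r) ^ n" by simp
  have "\<not> contains_focal n r F"
  proof
    assume "contains_focal n r F"
    then obtain H x where "H \<subseteq> F" "focal_family n r H x" unfolding contains_focal_def by blast
    moreover then have "H \<in> B" unfolding B_def using F(1) by blast
    ultimately show False using F(2) by blast
  qed
  then have g: "real (card F) \<le> real (g_ff r n)" using g_ff_ge F(1) unfolding U_def by simp
  have "(real (card B)) * (real m / 2 ^ n) ^ r \<le> (2 * real r) ^ n * (real m / 2 ^ n) ^ r"
    using cB by (intro mult_right_mono) auto
  then show ?thesis using F(3) g cU by simp
qed

lemma singleton_family:
  assumes r: "r \<ge> 3"
  shows "{{}} \<subseteq> Pow {1..n}" "\<not> contains_near_sunflower n r {{}}" "\<not> contains_focal n r {{}}"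
proof -
  show "{{}} \<subseteq> Pow {1..n}" by simp
  have small: "card H \<le> 1" if "H \<subseteq> {{}::nat set}" for H
    using card_mono[OF _ that] by simp
  show "\<not> contains_near_sunflower n r {{}}"
  proof
    assume "contains_near_sunflower n r {{}}"
    then obtain H where "H \<subseteq> {{}}" "near_sunflower n r H" unfolding contains_near_sunflower_def by blast
    then have "card H \<le> 1" "card H = r" using small unfolding near_sunflower_def by auto
    then show False using r by simp
  qed
  show "\<not> contains_focal n r {{}}"
  proof
    assume "contains_focal n r {{}}"
    then obtain H x where "H \<subseteq> {{}}" "focal_family n r H x" unfolding contains_focal_def by blast
    then have "card H \<le> 1" "card H = r" using small unfolding focal_family_def by auto
    then show False using r by simp
  qed
qed

theorem theorem1p3:
  fixes r :: nat
  assumes "r \<ge> 3"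
  shows "(\<forall>n\<ge>1. g_ns r n \<le> g_ff r n \<and>
            real (g_ff r n) \<le> real (r - 1) * 2 ^ nat \<lceil>real ((r - 2) * n) / real (r - 1)\<rceil>)
       \<and> (\<exists>c>0. \<forall>n\<ge>1. real (g_ns r n) \<ge> c * (2 / real (r + 1) powr (1 / real (r - 1))) ^ n)
       \<and> (\<exists>c>0. \<forall>n\<ge>1. real (g_ff r n) \<ge> c * (2 / real r powr (1 / real (r - 1))) ^ n)"
proof (intro conjI allI impI)
  fix n :: nat
  show "g_ns r n \<le> g_ff r n" by (rule ns_le_ff[OF assms])
  have "g_ff r n \<le> (r - 1) * 2 ^ (n - n div (r - 1))"
    by (rule g_ff_le) (rule upper_bound[OF assms])
  then have "real (g_ff r n) \<le> real ((r - 1) * 2 ^ (n - n div (r - 1)))" by (simp only: of_nat_le_iff)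
  then show "real (g_ff r n) \<le> real (r - 1) * 2 ^ nat \<lceil>real ((r - 2) * n) / real (r - 1)\<rceil>"
    unfolding ceil_eq[OF assms] by simp
next
  have g1: "1 \<le> g_ns r n" for n
    using g_ns_ge[OF singleton_family(1,2)[OF assms]] by simp
  show "\<exists>c>0. \<forall>n\<ge>1. real (g_ns r n) \<ge> c * (2 / real (r + 1) powr (1 / real (r - 1))) ^ n"
    by (rule lower_general[OF _ assms g1 ns_lower_n[OF assms]]) simp
next
  have g1: "1 \<le> g_ff r n" for n
    using g_ff_ge[OF singleton_family(1,3)[OF assms]] by simp
  show "\<exists>c>0. \<forall>n\<ge>1. real (g_ff r n) \<ge> c * (2 / real r powr (1 / real (r - 1))) ^ n"
    by (rule lower_general[OF _ assms g1 ff_lower_n[OF assms]]) (use assms in simp)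
qed

end
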